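(* Let $a>0$, $b\ge0$, $\eta>0$, $\alpha>0$. Let $(r_t)_{t\ge0}$ be real numbers with $r_{t+1}\le r_t-\alpha\frac a2r_t^2+\alpha\frac b\eta$, define $\rho_0=r_0$, $\rho_{t+1}=\rho_t-\alpha\frac a2\rho_t^2+\alpha\frac b\eta$, let $\bar\rho=\sqrt{\frac{2b}{\eta a}}$, and define $\nu_0=\rho_0$, $\nu_{t+1}=\big(1-\alpha\frac a2\bar\rho\big)\nu_t+\alpha\frac b\eta$ for $t\ge0$. If $r_0\ge\bar\rho$ and $\alpha\le\frac{1}{a\,r_0}$, then $\nu_t\ge\rho_t$ for all $t\ge0$. *)

theory Defs
  imports Complex_Main
begin

end

theory Submission
  imports Defs
begin

theorem lemmaC9:
  fixes a b \<eta> \<alpha> :: real and r \<rho> \<nu> :: "nat \<Rightarrow> real"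
  assumes "a > 0" and "b \<ge> 0" and "\<eta> > 0" and "\<alpha> > 0"
    and "\<And>t. r (Suc t) \<le> r t - \<alpha> * (a / 2) * (r t)^2 + \<alpha> * (b / \<eta>)"
    and "\<rho> 0 = r 0"
    and "\<And>t. \<rho> (Suc t) = \<rho> t - \<alpha> * (a / 2) * (\<rho> t)^2 + \<alpha> * (b / \<eta>)"
    and "\<nu> 0 = \<rho> 0"
    and "\<And>t. \<nu> (Suc t) = (1 - \<alpha> * (a / 2) * sqrt (2 * b / (\<eta> * a))) * \<nu> t + \<alpha> * (b / \<eta>)"
    and "r 0 \<ge> sqrt (2 * b / (\<eta> * a))"
    and "\<alpha> \<le> 1 / (a * r 0)"
  shows "\<forall>t. \<nu> t \<ge> \<rho> t"
proof -
  define s where "s = sqrt (2 * b / (\<eta> * a))"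
  define c where "c = \<alpha> * (a / 2)"
  have s0: "s \<ge> 0" using assms(1-3) unfolding s_def by simp
  have ss: "s^2 = 2 * b / (\<eta> * a)" unfolding s_def using assms(1-3) by simp
  have d: "\<alpha> * (b / \<eta>) = c * s^2" unfolding ss c_def using assms(1-3) by (simp add: field_simps)
  have c0: "c > 0" unfolding c_def using assms by simp
  have r0: "r 0 > 0"
  proof (rule ccontr)
    assume "\<not> r 0 > 0"
    then have "r 0 = 0" using s0 assms(10) unfolding s_def by linarith
    then show False using assms(4,11) by simp
  qed
  have cr: "2 * c * r 0 \<le> 1" unfolding c_def using assms(11) assms(1) r0
    by (simp add: field_simps)
  have rs: "s \<le> r 0" using assms(10) unfolding s_def .
  have R: "\<And>t. \<rho> (Suc t) - s = (\<rho> t - s) * (1 - c * (\<rho> t + s))"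
  proof -
    fix t
    have "\<rho> (Suc t) = \<rho> t - c * (\<rho> t)^2 + c * s^2" using assms(7)[of t] d unfolding c_def by simp
    then show "\<rho> (Suc t) - s = (\<rho> t - s) * (1 - c * (\<rho> t + s))" by (simp add: algebra_simps power2_eq_square)
  qed
  have N: "\<And>t. \<nu> (Suc t) - s = (\<nu> t - s) * (1 - c * s)"
  proof -
    fix t
    have "\<nu> (Suc t) = (1 - c * s) * \<nu> t + c * s^2" using assms(9)[of t] d unfolding c_def s_def by simp
    then show "\<nu> (Suc t) - s = (\<nu> t - s) * (1 - c * s)" by (simp add: algebra_simps power2_eq_square)
  qed
  have "s \<le> \<rho> t \<and> \<rho> t \<le> \<nu> t \<and> \<rho> t \<le> r 0" for t
  proof (induction t)
    case 0 then show ?case using assms(6,8) rs by simp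
  next
    case (Suc t)
    then have h1: "s \<le> \<rho> t" and h2: "\<rho> t \<le> \<nu> t" and h3: "\<rho> t \<le> r 0" by auto
    have f1: "0 \<le> 1 - c * (\<rho> t + s)"
    proof -
      have "c * (\<rho> t + s) \<le> c * (2 * r 0)" using c0 h3 rs by (intro mult_left_mono) auto
      then show ?thesis using cr by simp
    qed
    have f2: "1 - c * (\<rho> t + s) \<le> 1 - c * s" using c0 h1 s0
      by (simp add: mult_left_mono)
    have a1: "\<rho> (Suc t) - s \<ge> 0" using R[of t] f1 h1 by simp
    have a2: "\<rho> (Suc t) - s \<le> \<nu> (Suc t) - s"
    proof -
      have "(\<rho> t - s) * (1 - c * (\<rho> t + s)) \<le> (\<rho> t - s) * (1 - c * s)"
        using f2 h1 by (intro mult_left_mono) auto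
      also have "\<dots> \<le> (\<nu> t - s) * (1 - c * s)"
        using f1 f2 h2 by (intro mult_right_mono) auto
      finally show ?thesis using R[of t] N[of t] by simp
    qed
    have a3: "\<rho> (Suc t) \<le> \<rho> t"
    proof -
      have "(\<rho> t - s) * (1 - c * (\<rho> t + s)) \<le> (\<rho> t - s) * 1"
        using h1 c0 s0 by (intro mult_left_mono) auto
      then show ?thesis using R[of t] by simp
    qed
    show ?case using a1 a2 a3 h3 by simp
  qed
  then show ?thesis by blast
qed

end
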